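(* Let $G$ be a complete edge-colored permutation graph. Then the quotient graph $G[M]/\mathbb{P}_{\max}(M)$ of each strong prime module $M$ of $G$ is a complete edge-colored permutation graph. In particular, for every strong prime module $M$ with $|M|\ge 3$, the quotient graph $G[M]/\mathbb{P}_{\max}(M)$ is $2$-edge-colored.
   Context: A complete $k$-edge-colored graph $G=(V,E_1,\dots,E_k)$ is the complete graph on a finite set $V$ with edges partitioned into $k$ nonempty color classes $E_i$ (the one-vertex graph also counts); $G_{|i}=(V,E_i)$. A labeling is a bijection $\ell:V\to\{1,\dots,|V|\}$. A graph $(V,E)$ with labeling $\ell$ is a simple permutation graph of a permutation $\pi$ if for all $u,v$ with $\ell(u)>\ell(v)$: $\{u,v\}\in E$ iff $\pi^{-1}(\ell(u))<\pi^{-1}(\ell(v))$. $G$ is a complete edge-colored permutation graph if there exist a labeling $\ell$ and permutations $\pi_1,\dots,\pi_k$ with $(G_{|i},\ell)$ a simple permutation graph of $\pi_i$ for all $i$. A module is a set $M\subseteq V$ such that for every $v\notin M$ all edges $\{u,v\}$, $u\in M$, have the same color; a strong module is a nonempty module comparable by inclusion or disjoint with every other module. For a strong module $M$ with $|M|\ge2$, $\mathbb{P}_{\max}(M)$ is the set of inclusion-maximal strong modules properly contained in $M$, and $G[M]/\mathbb{P}_{\max}(M)$ is the complete graph on $\mathbb{P}_{\max}(M)$ with $\{M_a,M_b\}$ colored by the common color of all edges between $M_a$ and $M_b$; for $|M|=1$ it is the one-vertex graph. A strong module is series if its quotient graph has at least two vertices and all its edges have one color, and prime otherwise. *)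

theory Defs
  imports Main
begin

definition complete_ec_graph :: "'a set \<Rightarrow> ('a \<Rightarrow> 'a \<Rightarrow> 'c) \<Rightarrow> bool" where
  "complete_ec_graph V c \<longleftrightarrow> finite V \<and> V \<noteq> {} \<and>
     (\<forall>u\<in>V. \<forall>v\<in>V. u \<noteq> v \<longrightarrow> c u v = c v u)"

definition colors :: "'a set \<Rightarrow> ('a \<Rightarrow> 'a \<Rightarrow> 'c) \<Rightarrow> 'c set" where
  "colors V c = {c u v | u v. u \<in> V \<and> v \<in> V \<and> u \<noteq> v}"

definition color_class :: "'a set \<Rightarrow> ('a \<Rightarrow> 'a \<Rightarrow> 'c) \<Rightarrow> 'c \<Rightarrow> 'a set set" where
  "color_class V c i = {{u, v} | u v. u \<in> V \<and> v \<in> V \<and> u \<noteq> v \<and> c u v = i}"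

definition simple_perm_graph ::
    "'a set \<Rightarrow> 'a set set \<Rightarrow> ('a \<Rightarrow> nat) \<Rightarrow> (nat \<Rightarrow> nat) \<Rightarrow> bool" where
  "simple_perm_graph V E lab \<pi> \<longleftrightarrow>
     (\<forall>u\<in>V. \<forall>v\<in>V. lab u > lab v \<longrightarrow>
        ({u, v} \<in> E \<longleftrightarrow>
          inv_into {1..card V} \<pi> (lab u) < inv_into {1..card V} \<pi> (lab v)))"

definition ec_perm_graph :: "'a set \<Rightarrow> ('a \<Rightarrow> 'a \<Rightarrow> 'c) \<Rightarrow> bool" where
  "ec_perm_graph V c \<longleftrightarrow> complete_ec_graph V c \<and>
     (\<exists>lab. bij_betw lab V {1..card V} \<and>
        (\<forall>i\<in>colors V c. \<exists>\<pi>. bij_betw \<pi> {1..card V} {1..card V} \<and>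
            simple_perm_graph V (color_class V c i) lab \<pi>))"

definition is_module :: "'a set \<Rightarrow> ('a \<Rightarrow> 'a \<Rightarrow> 'c) \<Rightarrow> 'a set \<Rightarrow> bool" where
  "is_module V c M \<longleftrightarrow> M \<subseteq> V \<and>
     (\<forall>v\<in>V - M. \<forall>u\<in>M. \<forall>u'\<in>M. c u v = c u' v)"

definition strong_module :: "'a set \<Rightarrow> ('a \<Rightarrow> 'a \<Rightarrow> 'c) \<Rightarrow> 'a set \<Rightarrow> bool" where
  "strong_module V c M \<longleftrightarrow> is_module V c M \<and> M \<noteq> {} \<and>
     (\<forall>M'. is_module V c M' \<longrightarrow> M \<subseteq> M' \<or> M' \<subseteq> M \<or> M \<inter> M' = {})"

definition Pmax :: "'a set \<Rightarrow> ('a \<Rightarrow> 'a \<Rightarrow> 'c) \<Rightarrow> 'a set \<Rightarrow> 'a set set" where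
  "Pmax V c M = {M'. strong_module V c M' \<and> M' \<subset> M \<and>
       (\<forall>M''. strong_module V c M'' \<and> M'' \<subset> M \<and> M' \<subseteq> M'' \<longrightarrow> M'' = M')}"

text \<open>Colouring of the quotient graph: the colour of an edge between representatives
  (well defined since the members of Pmax are disjoint modules).\<close>
definition quot_col :: "('a \<Rightarrow> 'a \<Rightarrow> 'c) \<Rightarrow> 'a set \<Rightarrow> 'a set \<Rightarrow> 'c" where
  "quot_col c Ma Mb = c (SOME u. u \<in> Ma) (SOME v. v \<in> Mb)"

definition quot_vertices :: "'a set \<Rightarrow> ('a \<Rightarrow> 'a \<Rightarrow> 'c) \<Rightarrow> 'a set \<Rightarrow> 'a set set" where
  "quot_vertices V c M = (if card M \<ge> 2 then Pmax V c M else {M})"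

definition series_module :: "'a set \<Rightarrow> ('a \<Rightarrow> 'a \<Rightarrow> 'c) \<Rightarrow> 'a set \<Rightarrow> bool" where
  "series_module V c M \<longleftrightarrow> strong_module V c M \<and>
     card (quot_vertices V c M) \<ge> 2 \<and>
     card (colors (quot_vertices V c M) (quot_col c)) = 1"

definition prime_module :: "'a set \<Rightarrow> ('a \<Rightarrow> 'a \<Rightarrow> 'c) \<Rightarrow> 'a set \<Rightarrow> bool" where
  "prime_module V c M \<longleftrightarrow> strong_module V c M \<and> \<not> series_module V c M"

end

theory Submission
  imports Defs
begin


definition RF :: "'a set \<Rightarrow> ('a \<Rightarrow> 'a \<Rightarrow> 'c) \<Rightarrow> bool" where
 "RF W c \<longleftrightarrow> (\<forall>x\<in>W. \<forall>y\<in>W. \<forall>z\<in>W. x\<noteq>y \<and> y\<noteq>z \<and> x\<noteq>z \<longrightarrow>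
     c x y = c x z \<or> c x y = c y z \<or> c x z = c y z)"

definition closedc :: "'a set \<Rightarrow> ('a \<Rightarrow> 'a \<Rightarrow> 'c) \<Rightarrow> 'c \<Rightarrow> 'a set \<Rightarrow> bool" where
 "closedc W c j S \<longleftrightarrow> (\<forall>x\<in>S. \<forall>y\<in>W-S. c x y \<noteq> j)"

definition compc :: "'a set \<Rightarrow> ('a \<Rightarrow> 'a \<Rightarrow> 'c) \<Rightarrow> 'c \<Rightarrow> 'a set \<Rightarrow> bool" where
 "compc W c j X \<longleftrightarrow> X \<noteq> {} \<and> X \<subseteq> W \<and> closedc W c j X \<and>
    (\<forall>Y. Y \<subseteq> X \<longrightarrow> Y \<noteq> {} \<longrightarrow> Y \<noteq> X \<longrightarrow> (\<exists>y\<in>Y. \<exists>z\<in>X-Y. c y z = j))"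

definition symc :: "'a set \<Rightarrow> ('a \<Rightarrow> 'a \<Rightarrow> 'c) \<Rightarrow> bool" where
 "symc W c \<longleftrightarrow> (\<forall>x\<in>W. \<forall>y\<in>W. x\<noteq>y \<longrightarrow> c x y = c y x)"

lemma RF_inst: "RF W c \<Longrightarrow> x\<in>W \<Longrightarrow> y\<in>W \<Longrightarrow> z\<in>W \<Longrightarrow> x\<noteq>y \<Longrightarrow> y\<noteq>z \<Longrightarrow> x\<noteq>z \<Longrightarrow>
   c x y = c x z \<or> c x y = c y z \<or> c x z = c y z"
  unfolding RF_def by blast

lemma sym_inst: "symc W c \<Longrightarrow> x\<in>W \<Longrightarrow> y\<in>W \<Longrightarrow> x\<noteq>y \<Longrightarrow> c x y = c y x"
  unfolding symc_def by blast

lemma comp_conn: "compc W c j X \<Longrightarrow> Y \<subseteq> X \<Longrightarrow> Y \<noteq> {} \<Longrightarrow> Y \<noteq> X \<Longrightarrow> \<exists>y\<in>Y. \<exists>z\<in>X-Y. c y z = j"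
  unfolding compc_def by blast

lemma comp_facts: "compc W c j X \<Longrightarrow> X \<noteq> {} \<and> X \<subseteq> W \<and> closedc W c j X"
  unfolding compc_def by blast

lemma closed_compl:
  assumes "symc W c" "closedc W c j S" "S \<subseteq> W"
  shows "closedc W c j (W - S)"
  using assms unfolding closedc_def symc_def by (metis Diff_iff Diff_partition subsetD)

lemma comp_sub_closed:
  assumes "compc W c j X" "closedc W c j T" "x \<in> X" "x \<in> T"
  shows "X \<subseteq> T"
proof (rule ccontr)
  assume "\<not> X \<subseteq> T"
  then have "X \<inter> T \<subseteq> X" "X \<inter> T \<noteq> {}" "X \<inter> T \<noteq> X" using assms by auto
  then obtain y z where "y \<in> X \<inter> T" "z \<in> X - X \<inter> T" "c y z = j"
    using comp_conn[OF assms(1)] by meson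
  moreover have "z \<in> W - T" using calculation comp_facts[OF assms(1)] by blast
  ultimately show False using assms(2) unfolding closedc_def by auto
qed

lemma comp_exists:
  assumes "finite W" "symc W c" "d \<in> W"
  shows "\<exists>X. compc W c j X \<and> d \<in> X"
proof -
  let ?F = "\<lambda>X. X \<subseteq> W \<and> d \<in> X \<and> closedc W c j X"
  have "?F W" using assms unfolding closedc_def by auto
  then obtain X where X: "?F X" and min: "\<And>Y. ?F Y \<Longrightarrow> card X \<le> card Y"
    using ex_has_least_nat[of ?F W card] by blast
  have fX: "finite X" using X assms(1) finite_subset by blast
  have "compc W c j X"
    unfolding compc_def
  proof (intro conjI allI impI)
    show "X \<noteq> {}" "X \<subseteq> W" "closedc W c j X" using X by auto
  next
    fix Y assume Y: "Y \<subseteq> X" "Y \<noteq> {}" "Y \<noteq> X"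
    show "\<exists>y\<in>Y. \<exists>z\<in>X - Y. c y z = j"
    proof (rule ccontr)
      assume nc: "\<not> ?thesis"
      show False
      proof (cases "d \<in> Y")
        case True
        have "closedc W c j Y" unfolding closedc_def
        proof (intro ballI)
          fix x w assume xw: "x \<in> Y" "w \<in> W - Y"
          show "c x w \<noteq> j"
          proof (cases "w \<in> X")
            case True then show ?thesis using nc xw by blast
          next
            case False then show ?thesis using X Y xw unfolding closedc_def by blast
          qed
        qed
        then have FY: "?F Y" using X Y True by blast
        have "Y \<subset> X" using Y by blast
        then have "card Y < card X" by (rule psubset_card_mono[OF fX])
        moreover have "card X \<le> card Y" by (rule min[OF FY])
        ultimately show False by simp
      next
        case False
        have "closedc W c j (X - Y)" unfolding closedc_def
        proof (intro ballI)
          fix x w assume xw: "x \<in> X - Y" "w \<in> W - (X - Y)"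
          show "c x w \<noteq> j"
          proof (cases "w \<in> X")
            case True
            then have "w \<in> Y" "x \<noteq> w" using xw by auto
            then have "c w x \<noteq> j" using nc xw by blast
            moreover have "c x w = c w x" using assms(2) X xw \<open>x \<noteq> w\<close> unfolding symc_def by blast
            ultimately show ?thesis by simp
          next
            case False then show ?thesis using X Y xw unfolding closedc_def by blast
          qed
        qed
        then have FY: "?F (X - Y)" using X Y False by blast
        have "X - Y \<subset> X" using Y by blast
        then have "card (X - Y) < card X" by (rule psubset_card_mono[OF fX])
        moreover have "card X \<le> card (X - Y)" by (rule min[OF FY])
        ultimately show False by simp
      qed
    qed
  qed
  then show ?thesis using X by blast
qed

lemma comp_module:
  assumes "compc W c j X" "symc W c" "RF W c" "a \<in> W - X" "x \<in> X" "y \<in> X"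
  shows "c a x = c a y"
proof (rule ccontr)
  assume ne: "c a x \<noteq> c a y"
  let ?Y = "{z\<in>X. c a z = c a x}"
  have "?Y \<subseteq> X" by blast
  moreover have "?Y \<noteq> {}" using assms(5) by blast
  moreover have "?Y \<noteq> X"
  proof
    assume "?Y = X"
    then have "y \<in> ?Y" using assms(6) by simp
    then show False using ne by simp
  qed
  ultimately obtain y' z where yz: "y' \<in> ?Y" "z \<in> X - ?Y" "c y' z = j"
    using comp_conn[OF assms(1)] by meson
  have XW: "X \<subseteq> W" using comp_facts[OF assms(1)] by blast
  have cl: "closedc W c j X" using comp_facts[OF assms(1)] by blast
  have aW: "a \<in> W" using assms(4) by blast
  have yW: "y' \<in> W" "z \<in> W" using yz XW by auto
  have n1: "c y' a \<noteq> j" "c z a \<noteq> j" using cl yz assms(4) unfolding closedc_def by auto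
  have neq: "a \<noteq> y'" "a \<noteq> z" "y' \<noteq> z" using yz assms(4) by auto
  have e1: "c a y' = c y' a" by (rule sym_inst[OF assms(2) aW yW(1) neq(1)])
  have e2: "c a z = c z a" by (rule sym_inst[OF assms(2) aW yW(2) neq(2)])
  have ne: "c a y' \<noteq> c a z" using yz by auto
  have "c a y' = c a z \<or> c a y' = c y' z \<or> c a z = c y' z"
    by (rule RF_inst[OF assms(3) aW yW neq(1) neq(3) neq(2)])
  then show False using ne e1 e2 n1 yz(3) by auto
qed

lemma three_other:
  assumes "3 \<le> card A"
  shows "\<exists>l\<in>A. l \<noteq> j \<and> l \<noteq> k"
proof (rule ccontr)
  assume "\<not> ?thesis"
  then have "A \<subseteq> {j, k}" by auto
  then have "card A \<le> card {j, k}" by (intro card_mono) auto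
  also have "\<dots> \<le> 2" by (simp add: card_insert_le_m1)
  finally show False using assms by simp
qed

lemma colors_mono: "W' \<subseteq> W \<Longrightarrow> colors W' c \<subseteq> colors W c"
  unfolding colors_def by blast

lemma RF_mono: "RF W c \<Longrightarrow> W' \<subseteq> W \<Longrightarrow> RF W' c"
  unfolding RF_def by blast

lemma symc_mono: "symc W c \<Longrightarrow> W' \<subseteq> W \<Longrightarrow> symc W' c"
  unfolding symc_def by blast

lemma gallai:
  assumes "finite W" "symc W c" "RF W c" "3 \<le> card (colors W c)"
  shows "\<exists>j\<in>colors W c. \<exists>S. S \<noteq> {} \<and> S \<subset> W \<and> closedc W c j S"
  using assms
proof (induction "card W" arbitrary: W rule: less_induct)
  case less
  note fin = less.prems(1) and sym = less.prems(2) and rf = less.prems(3) and c3 = less.prems(4)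
  show ?case
  proof (rule ccontr)
    assume H: "\<not> ?case"
    have Hc: "\<not> closedc W c j S" if "j \<in> colors W c" "S \<noteq> {}" "S \<subset> W" for j S
      using H that by blast
    have "colors W c \<noteq> {}" using c3 by auto
    then obtain a0 b0 where ab0: "a0 \<in> W" "b0 \<in> W" "a0 \<noteq> b0" unfolding colors_def by blast
    obtain v where v: "v \<in> W" using ab0 by blast
    have vW: "{v} \<subset> W" using v ab0 by blast
    define W' where "W' = W - {v}"
    have W'ne: "W' \<noteq> {}" using ab0 W'_def by blast
    have W'W: "W' \<subseteq> W" "W' \<noteq> W" using W'_def v by auto
    have colsame: "colors W' c = colors W c"
    proof (rule equalityI)
      show "colors W' c \<subseteq> colors W c" by (rule colors_mono[OF W'W(1)])
    next
      show "colors W c \<subseteq> colors W' c"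
      proof (rule subsetI)
        fix i assume i: "i \<in> colors W c"
        show "i \<in> colors W' c"
        proof (rule ccontr)
          assume ni: "i \<notin> colors W' c"
          show False
          proof (cases "\<exists>x\<in>W'. c v x \<noteq> i")
            case True
            then obtain x where x: "x \<in> W'" "c v x \<noteq> i" by blast
            have xW: "x \<in> W" "x \<noteq> v" using x unfolding W'_def by auto
            have "closedc W c i {x}" unfolding closedc_def
            proof (intro ballI)
              fix y z assume "y \<in> {x}" "z \<in> W - {x}"
              then have yz: "y = x" "z \<in> W" "z \<noteq> x" by auto
              show "c y z \<noteq> i"
              proof (cases "z = v")
                case True
                have "c x v = c v x" by (rule sym_inst[OF sym xW(1) v xW(2)])
                then show ?thesis using x(2) yz(1) True by simp
              next
                case False
                then have "z \<in> W'" using yz unfolding W'_def by auto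
                then have "c x z \<in> colors W' c" unfolding colors_def using x(1) yz(3) by blast
                then show ?thesis using ni yz(1) by auto
              qed
            qed
            moreover have "{x} \<subset> W" using xW v by auto
            ultimately show False using Hc[OF i] by blast
          next
            case False
            obtain l where l: "l \<in> colors W c" "l \<noteq> i" using three_other[OF c3, of i i] by blast
            have "closedc W c l {v}" unfolding closedc_def
            proof (intro ballI)
              fix y z assume "y \<in> {v}" "z \<in> W - {v}"
              then have "y = v" "z \<in> W'" unfolding W'_def by auto
              then show "c y z \<noteq> l" using False l(2) by auto
            qed
            moreover note vW
            ultimately show False using Hc[OF l(1)] by blast
          qed
        qed
      qed
    qed
    have cardlt: "card W' < card W" unfolding W'_def by (rule card_Diff1_less[OF fin v])
    have finW': "finite W'" using fin W'_def by simp
    have symW': "symc W' c" by (rule symc_mono[OF sym W'W(1)])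
    have rfW': "RF W' c" by (rule RF_mono[OF rf W'W(1)])
    have c3': "3 \<le> card (colors W' c)" using colsame c3 by simp
    have IH: "\<exists>j\<in>colors W' c. \<exists>S. S \<noteq> {} \<and> S \<subset> W' \<and> closedc W' c j S"
      by (rule less.hyps[OF cardlt finW' symW' rfW' c3'])
    then obtain j S' where j: "j \<in> colors W' c" and S': "S' \<noteq> {}" "S' \<subset> W'"
        "closedc W' c j S'" by blast
    have jW: "j \<in> colors W c" using j colsame by simp
    show False
    proof (cases "\<exists>b\<in>W'. c v b \<noteq> j")
      case False
      obtain l where l: "l \<in> colors W c" "l \<noteq> j" using three_other[OF c3, of j j] by blast
      have "closedc W c l {v}" using False l unfolding closedc_def W'_def by auto
      moreover note vW
      ultimately show False using Hc[OF l(1)] by blast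
    next
      case True
      then obtain b where b: "b \<in> W'" "c v b \<noteq> j" by blast
      define k where "k = c v b"
      obtain C where C: "compc W' c j C" "b \<in> C" using comp_exists[OF finW' symW' b(1)] by blast
      have CW': "C \<subseteq> W'" and Ccl: "closedc W' c j C" using C unfolding compc_def by auto
      have "C \<subseteq> S' \<or> C \<subseteq> W' - S'"
      proof (cases "b \<in> S'")
        case True then show ?thesis using comp_sub_closed[OF C(1) S'(3)] C(2) by blast
      next
        case False
        have "closedc W' c j (W' - S')" using closed_compl[OF symW' S'(3)] S'(2) by blast
        then show ?thesis using comp_sub_closed[OF C(1)] C(2) b(1) False by blast
      qed
      then have "C \<noteq> W'" using S' by blast
      then obtain d0 where d0: "d0 \<in> W' - C" using CW' by blast
      have claimA: "(\<forall>x\<in>C. c d x = k) \<and> (\<exists>a\<in>W'-C. c v a = j \<and> (\<forall>x\<in>C. c a x = k))"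
        if d: "d \<in> W' - C" for d
      proof -
        obtain D where D: "compc W' c j D" "d \<in> D" using comp_exists[OF finW' symW'] d by blast
        have DW': "D \<subseteq> W'" and Dcl: "closedc W' c j D" using D unfolding compc_def by auto
        have DC: "D \<inter> C = {}"
        proof (rule ccontr)
          assume "D \<inter> C \<noteq> {}"
          then obtain z where "z \<in> D" "z \<in> C" by blast
          then have "D \<subseteq> C" using comp_sub_closed[OF D(1) Ccl] by blast
          then show False using d D(2) by blast
        qed
        have "v \<notin> D" using DW' unfolding W'_def by blast
        then have "D \<noteq> {}" "D \<subset> W" using D(2) DW' W'W(1) v by blast+
        then have "\<not> closedc W c j D" using Hc[OF jW] by blast
        then obtain a y where ay: "a \<in> D" "y \<in> W - D" "c a y = j" unfolding closedc_def by blast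
        have "y = v"
        proof (rule ccontr)
          assume "y \<noteq> v"
          then have "y \<in> W' - D" using ay W'_def by auto
          then show False using Dcl ay unfolding closedc_def by blast
        qed
        have aW': "a \<in> W'" using ay DW' by blast
        have aC: "a \<in> W' - C" using ay DC aW' by blast
        have bD: "b \<in> W' - D" using DC C(2) b(1) by blast
        have vneq: "v \<noteq> a" "v \<noteq> b" "a \<noteq> b" using aC W'_def b(1) C(2) by auto
        have "a \<in> W" using aW' W'W by blast
        then have cva: "c v a = j" using ay(3) \<open>y = v\<close> sym_inst[OF sym v \<open>a \<in> W\<close> vneq(1)] by simp
        have cab_ne: "c a b \<noteq> j"
        proof -
          have "c b a \<noteq> j" using Ccl C(2) aC unfolding closedc_def by blast
          moreover have "c a b = c b a" using symW' aW' b(1) vneq unfolding symc_def by blast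
          ultimately show ?thesis by simp
        qed
        have "c a b = k"
          using RF_inst[OF rf v \<open>a \<in> W\<close>, of b] b(1) W'W(1) vneq cva cab_ne b(2) unfolding k_def by auto
        have aC': "\<forall>x\<in>C. c a x = k"
        proof (intro ballI)
          fix x assume "x \<in> C"
          then show "c a x = k" using comp_module[OF C(1) symW' rfW' aC \<open>x \<in> C\<close> C(2)] \<open>c a b = k\<close> by simp
        qed
        have dmod: "\<forall>x\<in>C. c d x = c d b"
        proof (intro ballI)
          fix x assume "x \<in> C"
          then show "c d x = c d b" using comp_module[OF C(1) symW' rfW' d \<open>x \<in> C\<close> C(2)] by simp
        qed
        have "c b a = c b d" using comp_module[OF D(1) symW' rfW' bD ay(1) D(2)] .
        moreover have "c b a = c a b" using sym_inst[OF symW' b(1) aW'] vneq(3) by simp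
        moreover have "d \<noteq> b" using d C(2) by blast
        moreover have "c b d = c d b" using sym_inst[OF symW' b(1)] d \<open>d \<noteq> b\<close> by simp
        ultimately have "\<forall>x\<in>C. c d x = k" using dmod \<open>c a b = k\<close> by simp
        then show ?thesis using aC cva aC' by blast
      qed
      obtain a where a: "a \<in> W' - C" "c v a = j" "\<forall>x\<in>C. c a x = k" using claimA[OF d0] by blast
      have claimB: "c v x = j \<or> c v x = k" if x: "x \<in> C" for x
      proof -
        have "v \<noteq> a" "v \<noteq> x" "a \<noteq> x" using a x CW' W'_def by auto
        moreover have "a \<in> W" "x \<in> W" using a x CW' W'W by auto
        moreover have "k \<noteq> j" using b(2) k_def by simp
        ultimately show ?thesis using RF_inst[OF rf v \<open>a \<in> W\<close> \<open>x \<in> W\<close>] a(2) a(3) x by auto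
      qed
      obtain l where l: "l \<in> colors W c" "l \<noteq> j" "l \<noteq> k" using three_other[OF c3, of j k] by blast
      have "closedc W c l C" unfolding closedc_def
      proof (intro ballI)
        fix x y assume xy: "x \<in> C" "y \<in> W - C"
        have xW: "x \<in> W" "x \<noteq> v" using xy(1) CW' unfolding W'_def by blast+
        show "c x y \<noteq> l"
        proof (cases "y = v")
          case True
          then have "c x y = c v x" using sym_inst[OF sym xW(1) v xW(2)] by simp
          then show ?thesis using claimB[OF xy(1)] l by auto
        next
          case False
          then have yd: "y \<in> W' - C" using xy unfolding W'_def by blast
          then have "c y x = k" using claimA[OF yd] xy(1) by blast
          moreover have "x \<noteq> y" using xy by blast
          moreover have "y \<in> W" using xy by blast
          ultimately have "c x y = k" using sym_inst[OF sym xW(1) \<open>y \<in> W\<close>] by simp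
          then show ?thesis using l by simp
        qed
      qed
      moreover have "C \<noteq> {}" "C \<subset> W" using C(2) CW' W'W by blast+
      ultimately show False using Hc[OF l(1)] by blast
    qed
  qed
qed



lemma cc_iff:
  assumes "symc W c" "u \<in> W" "v \<in> W"
  shows "{u, v} \<in> color_class W c i \<longleftrightarrow> u \<noteq> v \<and> c u v = i"
proof
  assume "{u, v} \<in> color_class W c i"
  then obtain a b where ab: "{u, v} = {a, b}" "a \<in> W" "b \<in> W" "a \<noteq> b" "c a b = i"
    unfolding color_class_def by blast
  then have "(u = a \<and> v = b) \<or> (u = b \<and> v = a)" by (simp add: doubleton_eq_iff)
  then show "u \<noteq> v \<and> c u v = i"
  proof
    assume "u = a \<and> v = b" then show ?thesis using ab by simp
  next
    assume h: "u = b \<and> v = a"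
    then have "c u v = c a b" using sym_inst[OF assms(1) ab(3) ab(2)] ab(4) by simp
    then show ?thesis using ab h by simp
  qed
next
  assume "u \<noteq> v \<and> c u v = i"
  then show "{u, v} \<in> color_class W c i" unfolding color_class_def using assms by blast
qed

lemma complete_symc: "complete_ec_graph W c \<Longrightarrow> symc W c"
  unfolding complete_ec_graph_def symc_def by blast

lemma perm_order:
  assumes sym: "symc W c" and lab: "bij_betw lab W {1..card W}"
    and perm: "\<forall>i\<in>colors W c. \<exists>\<pi>. bij_betw \<pi> {1..card W} {1..card W} \<and>
            simple_perm_graph W (color_class W c i) lab \<pi>"
    and xyz: "x \<in> W" "y \<in> W" "z \<in> W" "lab x < lab y" "lab y < lab z"
  shows "c x z = c x y \<or> c x z = c y z"
proof -
  define i where "i = c x z"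
  have xz: "x \<noteq> z" using xyz by auto
  have "i \<in> colors W c" unfolding colors_def i_def using xyz xz by blast
  then obtain \<pi> where sp: "simple_perm_graph W (color_class W c i) lab \<pi>" using perm by blast
  define p where "p u = inv_into {1..card W} \<pi> (lab u)" for u
  have sp': "\<And>u v. u \<in> W \<Longrightarrow> v \<in> W \<Longrightarrow> lab u > lab v \<Longrightarrow>
      ({u, v} \<in> color_class W c i \<longleftrightarrow> p u < p v)"
    using sp unfolding simple_perm_graph_def p_def by blast
  have "{z, x} \<in> color_class W c i"
    using cc_iff[OF sym xyz(3) xyz(1)] sym_inst[OF sym xyz(3) xyz(1)] xz i_def by auto
  then have pzx: "p z < p x" using sp'[OF xyz(3) xyz(1)] xyz by simp
  show ?thesis
  proof (cases "p y < p x")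
    case True
    then have "{y, x} \<in> color_class W c i" using sp'[OF xyz(2) xyz(1)] xyz by simp
    then have "c y x = i" using cc_iff[OF sym xyz(2) xyz(1)] by simp
    moreover have "x \<noteq> y" using xyz by auto
    ultimately have "c x y = i" using sym_inst[OF sym xyz(1) xyz(2)] by simp
    then show ?thesis unfolding i_def by simp
  next
    case False
    then have "p z < p y" using pzx by simp
    then have "{z, y} \<in> color_class W c i" using sp'[OF xyz(3) xyz(2)] xyz by simp
    then have "c z y = i" using cc_iff[OF sym xyz(3) xyz(2)] by simp
    moreover have "y \<noteq> z" using xyz by auto
    ultimately have "c y z = i" using sym_inst[OF sym xyz(2) xyz(3)] by simp
    then show ?thesis unfolding i_def by simp
  qed
qed

lemma perm_RF:
  assumes "ec_perm_graph W c"
  shows "RF W c"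
proof -
  have sym: "symc W c" using assms complete_symc unfolding ec_perm_graph_def by blast
  obtain lab where lab: "bij_betw lab W {1..card W}"
    and perm: "\<forall>i\<in>colors W c. \<exists>\<pi>. bij_betw \<pi> {1..card W} {1..card W} \<and>
            simple_perm_graph W (color_class W c i) lab \<pi>"
    using assms unfolding ec_perm_graph_def by blast
  have inj: "inj_on lab W" using lab bij_betw_def by blast
  note L = perm_order[OF sym lab perm]
  show ?thesis unfolding RF_def
  proof (intro ballI impI)
    fix x y z assume xyz: "x \<in> W" "y \<in> W" "z \<in> W" "x \<noteq> y \<and> y \<noteq> z \<and> x \<noteq> z"
    have d: "lab x \<noteq> lab y" "lab y \<noteq> lab z" "lab x \<noteq> lab z"
      using xyz inj_onD[OF inj] by blast+
    have s1: "c x y = c y x" "c x z = c z x" "c y z = c z y"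
      using sym_inst[OF sym] xyz by auto
    consider "lab x < lab y" "lab y < lab z" | "lab x < lab z" "lab z < lab y"
      | "lab y < lab x" "lab x < lab z" | "lab y < lab z" "lab z < lab x"
      | "lab z < lab x" "lab x < lab y" | "lab z < lab y" "lab y < lab x"
      using d by linarith
    then show "c x y = c x z \<or> c x y = c y z \<or> c x z = c y z"
    proof cases
      case 1 then show ?thesis using L[of x y z] xyz s1 by auto
    next
      case 2 then show ?thesis using L[of x z y] xyz s1 by auto
    next
      case 3 then show ?thesis using L[of y x z] xyz s1 by auto
    next
      case 4 then show ?thesis using L[of y z x] xyz s1 by auto
    next
      case 5 then show ?thesis using L[of z x y] xyz s1 by auto
    next
      case 6 then show ?thesis using L[of z y x] xyz s1 by auto
    qed
  qed
qed

definition rk :: "('a \<Rightarrow> nat) \<Rightarrow> 'a set \<Rightarrow> 'a \<Rightarrow> nat" where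
  "rk g W x = card {y\<in>W. g y < g x} + 1"

lemma rk_mono:
  assumes "finite W" "x \<in> W" "y \<in> W" "g x < g y"
  shows "rk g W x < rk g W y"
proof -
  have "{z\<in>W. g z < g x} \<subset> {z\<in>W. g z < g y}" using assms by auto
  then have "card {z\<in>W. g z < g x} < card {z\<in>W. g z < g y}"
    by (rule psubset_card_mono[rotated]) (use assms(1) in simp)
  then show ?thesis unfolding rk_def by simp
qed

lemma rk_iff:
  assumes "finite W" "inj_on g W" "x \<in> W" "y \<in> W"
  shows "rk g W x < rk g W y \<longleftrightarrow> g x < g y"
proof
  assume h: "rk g W x < rk g W y"
  show "g x < g y"
  proof (rule ccontr)
    assume "\<not> g x < g y"
    then have "g y < g x \<or> g y = g x" by auto
    then show False
    proof
      assume "g y < g x" then have "rk g W y < rk g W x" by (rule rk_mono[OF assms(1) assms(4) assms(3)])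
      then show False using h by simp
    next
      assume "g y = g x" then have "y = x" by (rule inj_onD[OF assms(2) _ assms(4) assms(3)])
      then show False using h by simp
    qed
  qed
next
  assume "g x < g y" then show "rk g W x < rk g W y" by (rule rk_mono[OF assms(1) assms(3) assms(4)])
qed

lemma rk_bij:
  assumes "finite W" "inj_on g W"
  shows "bij_betw (rk g W) W {1..card W}"
proof -
  have inj: "inj_on (rk g W) W"
  proof (rule inj_onI)
    fix x y assume xy: "x \<in> W" "y \<in> W" "rk g W x = rk g W y"
    show "x = y"
    proof (rule ccontr)
      assume "x \<noteq> y"
      then have "g x \<noteq> g y" using inj_onD[OF assms(2) _ xy(1) xy(2)] by blast
      then have "g x < g y \<or> g y < g x" by auto
      then show False
      proof
        assume "g x < g y" then have "rk g W x < rk g W y" by (rule rk_mono[OF assms(1) xy(1) xy(2)])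
        then show False using xy(3) by simp
      next
        assume "g y < g x" then have "rk g W y < rk g W x" by (rule rk_mono[OF assms(1) xy(2) xy(1)])
        then show False using xy(3) by simp
      qed
    qed
  qed
  have sub: "rk g W ` W \<subseteq> {1..card W}"
  proof
    fix k assume "k \<in> rk g W ` W"
    then obtain x where x: "x \<in> W" "k = rk g W x" by blast
    have "{y\<in>W. g y < g x} \<subseteq> W - {x}" by auto
    then have "card {y\<in>W. g y < g x} \<le> card (W - {x})"
      by (rule card_mono[rotated]) (use assms(1) in simp)
    also have "\<dots> = card W - 1" using x assms(1) by simp
    finally have le: "card {y\<in>W. g y < g x} \<le> card W - 1" .
    have "0 < card W" using x(1) assms(1) by (auto simp: card_gt_0_iff)
    then have "card {y\<in>W. g y < g x} + 1 \<le> card W" using le by linarith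
    then show "k \<in> {1..card W}" using x unfolding rk_def by simp
  qed
  have "card (rk g W ` W) = card W" using card_image[OF inj] .
  then have "rk g W ` W = {1..card W}"
    using sub by (intro card_subset_eq) auto
  then show ?thesis using inj bij_betw_def by blast
qed



lemma induced:
  assumes G: "ec_perm_graph V c" and finW: "finite W" and neW: "W \<noteq> {}"
    and inj: "inj_on f W" and fW: "f ` W \<subseteq> V"
  shows "ec_perm_graph W (\<lambda>u v. c (f u) (f v))"
proof -
  define c' where "c' = (\<lambda>u v. c (f u) (f v))"
  have symV: "symc V c" using G complete_symc unfolding ec_perm_graph_def by blast
  have finV: "finite V" using G unfolding ec_perm_graph_def complete_ec_graph_def by blast
  obtain lab where lab: "bij_betw lab V {1..card V}"
    and perm: "\<forall>i\<in>colors V c. \<exists>\<pi>. bij_betw \<pi> {1..card V} {1..card V} \<and>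
            simple_perm_graph V (color_class V c i) lab \<pi>"
    using G unfolding ec_perm_graph_def by blast
  have fWV: "\<And>u. u \<in> W \<Longrightarrow> f u \<in> V" using fW by blast
  have fne: "\<And>u v. u \<in> W \<Longrightarrow> v \<in> W \<Longrightarrow> u \<noteq> v \<Longrightarrow> f u \<noteq> f v"
    using inj_onD[OF inj] by blast
  have symW: "symc W c'" unfolding symc_def c'_def
    using sym_inst[OF symV] fWV fne by blast
  have compl: "complete_ec_graph W c'"
    using symW finW neW unfolding complete_ec_graph_def symc_def by blast
  have injlab: "inj_on lab V" using lab bij_betw_def by blast
  have injlf: "inj_on (lab \<circ> f) W"
    using comp_inj_on[OF inj inj_on_subset[OF injlab fW]] .
  define lab' where "lab' = rk (lab \<circ> f) W"
  have lab'bij: "bij_betw lab' W {1..card W}" unfolding lab'_def by (rule rk_bij[OF finW injlf])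
  have lab'iff: "\<And>u v. u \<in> W \<Longrightarrow> v \<in> W \<Longrightarrow> lab' u < lab' v \<longleftrightarrow> lab (f u) < lab (f v)"
    unfolding lab'_def using rk_iff[OF finW injlf] by simp
  have colsub: "colors W c' \<subseteq> colors V c"
  proof
    fix i assume "i \<in> colors W c'"
    then obtain u v where uv: "u \<in> W" "v \<in> W" "u \<noteq> v" "i = c' u v" unfolding colors_def by blast
    then show "i \<in> colors V c" unfolding colors_def c'_def using fWV fne by blast
  qed
  have permW: "\<exists>\<pi>'. bij_betw \<pi>' {1..card W} {1..card W} \<and>
            simple_perm_graph W (color_class W c' i) lab' \<pi>'" if i: "i \<in> colors W c'" for i
  proof -
    obtain \<pi> where \<pi>: "bij_betw \<pi> {1..card V} {1..card V}"
      and sp: "simple_perm_graph V (color_class V c i) lab \<pi>" using perm colsub i by blast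
    define p where "p u = inv_into {1..card V} \<pi> (lab u)" for u
    have invbij: "bij_betw (inv_into {1..card V} \<pi>) {1..card V} {1..card V}"
      by (rule bij_betw_inv_into[OF \<pi>])
    have pbij: "bij_betw p V {1..card V}"
      using bij_betw_trans[OF lab invbij] unfolding p_def comp_def by simp
    have injp: "inj_on p V" using pbij bij_betw_def by blast
    have injpf: "inj_on (p \<circ> f) W"
      using comp_inj_on[OF inj inj_on_subset[OF injp fW]] .
    define q where "q = rk (p \<circ> f) W"
    have qbij: "bij_betw q W {1..card W}" unfolding q_def by (rule rk_bij[OF finW injpf])
    have qiff: "\<And>u v. u \<in> W \<Longrightarrow> v \<in> W \<Longrightarrow> q u < q v \<longleftrightarrow> p (f u) < p (f v)"
      unfolding q_def using rk_iff[OF finW injpf] by simp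
    define \<pi>' where "\<pi>' = lab' \<circ> inv_into W q"
    have \<pi>'bij: "bij_betw \<pi>' {1..card W} {1..card W}"
      unfolding \<pi>'_def by (rule bij_betw_trans[OF bij_betw_inv_into[OF qbij] lab'bij])
    have injq: "inj_on q W" using qbij bij_betw_def by blast
    have injpi: "inj_on \<pi>' {1..card W}" using \<pi>'bij bij_betw_def by blast
    have key: "inv_into {1..card W} \<pi>' (lab' u) = q u" if u: "u \<in> W" for u
    proof -
      have qu: "q u \<in> {1..card W}" using qbij u bij_betwE by blast
      have "\<pi>' (q u) = lab' u" unfolding \<pi>'_def using inv_into_f_f[OF injq u] by simp
      then have "inv_into {1..card W} \<pi>' (lab' u) = inv_into {1..card W} \<pi>' (\<pi>' (q u))" by simp
      also have "\<dots> = q u" by (rule inv_into_f_f[OF injpi qu])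
      finally show ?thesis .
    qed
    have "simple_perm_graph W (color_class W c' i) lab' \<pi>'"
      unfolding simple_perm_graph_def
    proof (intro ballI impI)
      fix u v assume uv: "u \<in> W" "v \<in> W" "lab' v < lab' u"
      have neq: "u \<noteq> v" using uv by auto
      have fuv: "f u \<in> V" "f v \<in> V" "f u \<noteq> f v" using fWV uv fne neq by auto
      have labgt: "lab (f v) < lab (f u)" using lab'iff[OF uv(2) uv(1)] uv(3) by simp
      have "{u, v} \<in> color_class W c' i \<longleftrightarrow> c (f u) (f v) = i"
        using cc_iff[OF symW uv(1) uv(2)] neq unfolding c'_def by simp
      also have "\<dots> \<longleftrightarrow> {f u, f v} \<in> color_class V c i"
        using cc_iff[OF symV fuv(1) fuv(2)] fuv(3) by simp
      also have "\<dots> \<longleftrightarrow> p (f u) < p (f v)"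
        using sp fuv labgt unfolding simple_perm_graph_def p_def by blast
      also have "\<dots> \<longleftrightarrow> q u < q v" using qiff[OF uv(1) uv(2)] by simp
      also have "\<dots> \<longleftrightarrow> inv_into {1..card W} \<pi>' (lab' u) < inv_into {1..card W} \<pi>' (lab' v)"
        using key uv by simp
      finally show "{u, v} \<in> color_class W c' i \<longleftrightarrow>
          inv_into {1..card W} \<pi>' (lab' u) < inv_into {1..card W} \<pi>' (lab' v)" .
    qed
    then show ?thesis using \<pi>'bij by blast
  qed
  show ?thesis
    unfolding ec_perm_graph_def c'_def[symmetric]
    using compl lab'bij permW by blast
qed



definition rep :: "'a set \<Rightarrow> 'a" where "rep X = (SOME u. u \<in> X)"

lemma rep_in: "X \<noteq> {} \<Longrightarrow> rep X \<in> X"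
  unfolding rep_def by (rule someI_ex) blast

lemma qc_eq: "quot_col c = (\<lambda>X Y. c (rep X) (rep Y))"
  by (intro ext) (simp add: quot_col_def rep_def)

lemma strong_facts: "strong_module V c X \<Longrightarrow> is_module V c X \<and> X \<noteq> {} \<and> X \<subseteq> V"
proof -
  assume h: "strong_module V c X"
  then have "is_module V c X" "X \<noteq> {}" unfolding strong_module_def by simp_all
  moreover from this(1) have "X \<subseteq> V" unfolding is_module_def by simp
  ultimately show ?thesis by simp
qed

lemma strong_cmp: "strong_module V c X \<Longrightarrow> is_module V c N \<Longrightarrow> X \<subseteq> N \<or> N \<subseteq> X \<or> X \<inter> N = {}"
  unfolding strong_module_def by blast

lemma module_col: "is_module V c X \<Longrightarrow> u \<in> X \<Longrightarrow> u' \<in> X \<Longrightarrow> v \<in> V \<Longrightarrow> v \<notin> X \<Longrightarrow> c u v = c u' v"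
  unfolding is_module_def by blast

lemma Pmax_facts: "X \<in> Pmax V c M \<Longrightarrow> strong_module V c X \<and> X \<subset> M"
  unfolding Pmax_def by blast

lemma Pmax_max: "X \<in> Pmax V c M \<Longrightarrow> strong_module V c N \<Longrightarrow> N \<subset> M \<Longrightarrow> X \<subseteq> N \<Longrightarrow> N = X"
  unfolding Pmax_def by blast

lemma Pmax_disj:
  assumes "X \<in> Pmax V c M" "Y \<in> Pmax V c M" "X \<noteq> Y"
  shows "X \<inter> Y = {}"
proof -
  have sX: "strong_module V c X" and sY: "strong_module V c Y" using assms Pmax_facts by blast+
  have "X \<subseteq> Y \<or> Y \<subseteq> X \<or> X \<inter> Y = {}"
    using strong_cmp[OF sX] strong_facts[OF sY] by blast
  moreover have "\<not> X \<subseteq> Y" using Pmax_max[OF assms(1) sY] Pmax_facts[OF assms(2)] assms(3) by blast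
  moreover have "\<not> Y \<subseteq> X" using Pmax_max[OF assms(2) sX] Pmax_facts[OF assms(1)] assms(3) by blast
  ultimately show ?thesis by blast
qed

lemma singleton_module: "x \<in> V \<Longrightarrow> is_module V c {x}"
  unfolding is_module_def by simp

lemma singleton_strong: "x \<in> V \<Longrightarrow> strong_module V c {x}"
  unfolding strong_module_def using singleton_module by fastforce

lemma Pmax_cover:
  assumes "finite V" "M \<subseteq> V" "2 \<le> card M" "x \<in> M"
  shows "\<exists>X\<in>Pmax V c M. x \<in> X"
proof -
  let ?F = "\<lambda>N. strong_module V c N \<and> N \<subset> M \<and> x \<in> N"
  have finM: "finite M" using assms finite_subset by blast
  have "{x} \<noteq> M" using assms(3) by auto
  then have F1: "?F {x}" using singleton_strong[of x V c] assms by blast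
  have bnd: "\<forall>y. ?F y \<longrightarrow> card y < card M + 1"
  proof (intro allI impI)
    fix y assume "?F y"
    then have "card y \<le> card M" using card_mono[OF finM] by blast
    then show "card y < card M + 1" by simp
  qed
  obtain N where N: "?F N" and mx: "\<forall>y. ?F y \<longrightarrow> card y \<le> card N"
    using ex_has_greatest_nat[of ?F "{x}" card "card M + 1", OF F1 bnd] by blast
  have "N \<in> Pmax V c M" unfolding Pmax_def
  proof (intro CollectI conjI allI impI)
    show "strong_module V c N" "N \<subset> M" using N by blast+
  next
    fix M'' assume h: "strong_module V c M'' \<and> M'' \<subset> M \<and> N \<subseteq> M''"
    then have "?F M''" using N by blast
    then have "card M'' \<le> card N" using mx by blast
    moreover have "finite M''" using h finM finite_subset by blast
    ultimately show "M'' = N" using h card_seteq by blast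
  qed
  then show ?thesis using N by blast
qed

lemma quot_edge:
  assumes symV: "symc V c" and X: "X \<in> Pmax V c M" and Y: "Y \<in> Pmax V c M" and ne: "X \<noteq> Y"
    and x: "x \<in> X" and y: "y \<in> Y"
  shows "c x y = quot_col c X Y"
proof -
  have sX: "is_module V c X" "X \<noteq> {}" "X \<subseteq> V" using strong_facts Pmax_facts[OF X] by blast+
  have sY: "is_module V c Y" "Y \<noteq> {}" "Y \<subseteq> V" using strong_facts Pmax_facts[OF Y] by blast+
  have dj: "X \<inter> Y = {}" by (rule Pmax_disj[OF X Y ne])
  have rX: "rep X \<in> X" by (rule rep_in[OF sX(2)])
  have rY: "rep Y \<in> Y" by (rule rep_in[OF sY(2)])
  have yV: "y \<in> V" "y \<notin> X" using y sY(3) dj by auto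
  have rXV: "rep X \<in> V" "rep X \<notin> Y" "rep X \<noteq> y" using rX sX(3) dj y by auto
  have rYV: "rep Y \<in> V" "rep X \<noteq> rep Y" using rY sY(3) dj rX by auto
  have "c x y = c (rep X) y" by (rule module_col[OF sX(1) x rX yV])
  also have "\<dots> = c y (rep X)" by (rule sym_inst[OF symV rXV(1) yV(1) rXV(3)])
  also have "\<dots> = c (rep Y) (rep X)" by (rule module_col[OF sY(1) y rY rXV(1) rXV(2)])
  also have "\<dots> = c (rep X) (rep Y)" using sym_inst[OF symV rXV(1) rYV(1) rYV(2)] by simp
  finally show ?thesis by (simp add: qc_eq)
qed



lemma main_part:
  assumes G: "ec_perm_graph V c" and pm: "prime_module V c M"
  shows "ec_perm_graph (quot_vertices V c M) (quot_col c) \<and>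
           (card M \<ge> 3 \<longrightarrow> card (colors (quot_vertices V c M) (quot_col c)) = 2)"
proof -
  have symV: "symc V c" using G complete_symc unfolding ec_perm_graph_def by blast
  have finV: "finite V" using G unfolding ec_perm_graph_def complete_ec_graph_def by blast
  have sM: "strong_module V c M" and nser: "\<not> series_module V c M"
    using pm unfolding prime_module_def by simp_all
  have Mf: "is_module V c M" "M \<noteq> {}" "M \<subseteq> V" using strong_facts[OF sM] by simp_all
  have finM: "finite M" using Mf(3) finV finite_subset by blast
  define P where "P = Pmax V c M"
  define QV where "QV = quot_vertices V c M"
  have PP: "\<And>X. X \<in> P \<Longrightarrow> strong_module V c X \<and> X \<subset> M" unfolding P_def using Pmax_facts by blast
  have Pne: "\<And>X. X \<in> P \<Longrightarrow> X \<noteq> {} \<and> X \<subseteq> V" using PP strong_facts by blast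
  have Pdisj: "\<And>X Y. X \<in> P \<Longrightarrow> Y \<in> P \<Longrightarrow> X \<noteq> Y \<Longrightarrow> X \<inter> Y = {}"
    unfolding P_def using Pmax_disj by blast
  have finP: "finite P"
  proof -
    have "P \<subseteq> Pow V" using Pne by blast
    then show ?thesis using finV finite_subset by blast
  qed
  have QVprops: "finite QV \<and> QV \<noteq> {} \<and> (\<forall>X\<in>QV. X \<noteq> {} \<and> X \<subseteq> V) \<and>
      (\<forall>X\<in>QV. \<forall>Y\<in>QV. X \<noteq> Y \<longrightarrow> X \<inter> Y = {})"
  proof (cases "2 \<le> card M")
    case True
    then have QP: "QV = P" unfolding QV_def P_def quot_vertices_def by simp
    obtain x where x: "x \<in> M" using Mf(2) by blast
    obtain X where "X \<in> P" "x \<in> X" using Pmax_cover[OF finV Mf(3) True x] unfolding P_def by blast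
    then have Pn: "P \<noteq> {}" by blast
    have a: "\<forall>X\<in>P. X \<noteq> {} \<and> X \<subseteq> V" by (intro ballI Pne)
    have b: "\<forall>X\<in>P. \<forall>Y\<in>P. X \<noteq> Y \<longrightarrow> X \<inter> Y = {}" by (intro ballI impI Pdisj)
    show ?thesis unfolding QP using finP Pn a b by (intro conjI)
  next
    case False
    then have QM: "QV = {M}" unfolding QV_def quot_vertices_def by simp
    have a: "\<forall>X\<in>{M}. X \<noteq> {} \<and> X \<subseteq> V" using Mf(2) Mf(3) by blast
    have b: "\<forall>X\<in>{M}. \<forall>Y\<in>{M}. X \<noteq> Y \<longrightarrow> X \<inter> Y = {}" by blast
    have c: "finite {M}" "{M} \<noteq> {}" by simp_all
    show ?thesis unfolding QM using a b c by (intro conjI)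
  qed
  have injrep: "inj_on rep QV"
  proof (rule inj_onI)
    fix X Y assume XY: "X \<in> QV" "Y \<in> QV" "rep X = rep Y"
    have ne: "X \<noteq> {}" "Y \<noteq> {}" using QVprops XY(1,2) by simp_all
    have "rep X \<in> X" by (rule rep_in[OF ne(1)])
    moreover have "rep Y \<in> Y" by (rule rep_in[OF ne(2)])
    ultimately have "X \<inter> Y \<noteq> {}" using XY(3) by auto
    moreover have "X \<noteq> Y \<longrightarrow> X \<inter> Y = {}" using QVprops XY(1,2) by simp
    ultimately show "X = Y" by blast
  qed
  have repV: "rep ` QV \<subseteq> V"
  proof
    fix u assume "u \<in> rep ` QV"
    then obtain X where X: "X \<in> QV" "u = rep X" by blast
    have h: "X \<noteq> {} \<and> X \<subseteq> V" using QVprops X(1) by blast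
    then have "rep X \<in> X" by (intro rep_in) simp
    then show "u \<in> V" using X(2) h by blast
  qed
  have part1: "ec_perm_graph QV (quot_col c)"
  proof -
    have "finite QV" "QV \<noteq> {}" using QVprops by simp_all
    then show ?thesis unfolding qc_eq by (rule induced[OF G _ _ injrep repV])
  qed
  have part2: "card (colors QV (quot_col c)) = 2" if M3: "card M \<ge> 3"
  proof -
    have M2: "2 \<le> card M" using M3 by simp
    have QP: "QV = P" using M2 unfolding QV_def P_def quot_vertices_def by simp
    have cover: "\<And>x. x \<in> M \<Longrightarrow> \<exists>X\<in>P. x \<in> X"
      unfolding P_def using Pmax_cover[OF finV Mf(3) M2] by blast
    have memP: "\<And>x X. X \<in> P \<Longrightarrow> x \<in> X \<Longrightarrow> x \<in> M" using PP by blast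
    have part1P: "ec_perm_graph P (quot_col c)" using part1 QP by simp
    have symP: "symc P (quot_col c)"
      using part1P complete_symc unfolding ec_perm_graph_def by blast
    have rfP: "RF P (quot_col c)" by (rule perm_RF[OF part1P])
    have edge: "\<And>X Y x y. X \<in> P \<Longrightarrow> Y \<in> P \<Longrightarrow> X \<noteq> Y \<Longrightarrow> x \<in> X \<Longrightarrow> y \<in> Y \<Longrightarrow>
        c x y = quot_col c X Y"
      unfolding P_def using quot_edge[OF symV] by blast
    have cardP: "2 \<le> card P"
    proof (rule ccontr)
      assume "\<not> 2 \<le> card P"
      then have "card P \<le> Suc 0" by simp
      then have all_eq: "\<forall>a1\<in>P. \<forall>a2\<in>P. a1 = a2" using card_le_Suc0_iff_eq[OF finP] by blast
      obtain x where x: "x \<in> M" using Mf(2) by blast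
      then obtain X where X: "X \<in> P" "x \<in> X" using cover by blast
      have "M \<subseteq> X"
      proof
        fix y assume "y \<in> M"
        then obtain Y where "Y \<in> P" "y \<in> Y" using cover by blast
        then show "y \<in> X" using all_eq X by blast
      qed
      then show False using PP[OF X(1)] by blast
    qed
    obtain X1 Y1 where XY1: "X1 \<in> P" "Y1 \<in> P" "X1 \<noteq> Y1"
    proof -
      have "\<not> (\<forall>a1\<in>P. \<forall>a2\<in>P. a1 = a2)" using cardP card_le_Suc0_iff_eq[OF finP] by simp
      then show ?thesis using that by blast
    qed
    have colne: "colors P (quot_col c) \<noteq> {}" unfolding colors_def using XY1 by blast
    have colfin: "finite (colors P (quot_col c))"
    proof -
      have "colors P (quot_col c) \<subseteq> (\<lambda>(X, Y). quot_col c X Y) ` (P \<times> P)"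
        unfolding colors_def by auto
      then show ?thesis using finP finite_subset by blast
    qed
    have not1: "card (colors P (quot_col c)) \<noteq> 1"
      using nser sM cardP QP unfolding series_module_def QV_def by simp
    have ge2: "2 \<le> card (colors P (quot_col c))"
      using not1 colne colfin card_0_eq by fastforce
    show ?thesis
    proof (rule ccontr)
      assume "card (colors QV (quot_col c)) \<noteq> 2"
      then have c3: "3 \<le> card (colors P (quot_col c))" using ge2 QP by simp
      obtain j S where j: "j \<in> colors P (quot_col c)" and S: "S \<noteq> {}" "S \<subset> P"
          "closedc P (quot_col c) j S"
        using gallai[OF finP symP rfP c3] by blast
      obtain X0 Y0 where XY0: "X0 \<in> P" "Y0 \<in> P" "X0 \<noteq> Y0" "quot_col c X0 Y0 = j"
        using j unfolding colors_def by blast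
      obtain C where C: "compc P (quot_col c) j C" "X0 \<in> C"
        using comp_exists[OF finP symP XY0(1)] by blast
      have CP: "C \<subseteq> P" and Ccl: "closedc P (quot_col c) j C" and Cne: "C \<noteq> {}"
        using comp_facts[OF C(1)] by blast+
      have Y0C: "Y0 \<in> C"
      proof (rule ccontr)
        assume "Y0 \<notin> C"
        then have "Y0 \<in> P - C" using XY0 by blast
        then show False using Ccl C(2) XY0(4) unfolding closedc_def by blast
      qed
      have "C \<subseteq> S \<or> C \<subseteq> P - S"
      proof (cases "X0 \<in> S")
        case True then show ?thesis using comp_sub_closed[OF C(1) S(3)] C(2) by blast
      next
        case False
        have "closedc P (quot_col c) j (P - S)" using closed_compl[OF symP S(3)] S(2) by blast
        then show ?thesis using comp_sub_closed[OF C(1)] C(2) XY0(1) False by blast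
      qed
      then have "C \<noteq> P" using S by blast
      then obtain Z0 where Z0: "Z0 \<in> P" "Z0 \<notin> C" using CP by blast
      define U where "U = \<Union>C"
      have inC: "\<And>X. X \<in> P \<Longrightarrow> X \<inter> U \<noteq> {} \<Longrightarrow> X \<in> C"
      proof -
        fix X assume X: "X \<in> P" "X \<inter> U \<noteq> {}"
        then obtain X' where "X' \<in> C" "X \<inter> X' \<noteq> {}" unfolding U_def by blast
        then show "X \<in> C" using Pdisj X(1) CP by blast
      qed
      have UM: "U \<subseteq> M" unfolding U_def using CP PP by blast
      have UV: "U \<subseteq> V" using UM Mf(3) by blast
      have UneM: "U \<noteq> M"
      proof
        assume "U = M"
        have "Z0 \<noteq> {}" using Pne[OF Z0(1)] by simp
        then have "rep Z0 \<in> Z0" by (rule rep_in)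
        then have "rep Z0 \<in> U" using memP[OF Z0(1)] \<open>U = M\<close> by simp
        then have "Z0 \<inter> U \<noteq> {}" using \<open>rep Z0 \<in> Z0\<close> by blast
        then show False using inC[OF Z0(1)] Z0(2) by simp
      qed
      have X0U: "X0 \<subseteq> U" "Y0 \<subseteq> U" unfolding U_def using C(2) Y0C by blast+
      have modU: "is_module V c U" unfolding is_module_def
      proof (intro conjI ballI)
        show "U \<subseteq> V" by (rule UV)
      next
        fix v u u' assume v: "v \<in> V - U" and u: "u \<in> U" and u': "u' \<in> U"
        show "c u v = c u' v"
        proof (cases "v \<in> M")
          case False
          then show ?thesis using module_col[OF Mf(1)] u u' UM v by blast
        next
          case True
          then obtain Z where Z: "Z \<in> P" "v \<in> Z" using cover by blast
          have ZC: "Z \<notin> C" using Z v unfolding U_def by blast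
          obtain X where X: "X \<in> C" "u \<in> X" using u unfolding U_def by blast
          obtain X' where X': "X' \<in> C" "u' \<in> X'" using u' unfolding U_def by blast
          have XP: "X \<in> P" "X' \<in> P" using X X' CP by blast+
          have "X \<noteq> Z" "X' \<noteq> Z" using X X' ZC by blast+
          have e1: "c u v = quot_col c X Z" using edge[OF XP(1) Z(1) \<open>X \<noteq> Z\<close> X(2) Z(2)] .
          have e2: "c u' v = quot_col c X' Z" using edge[OF XP(2) Z(1) \<open>X' \<noteq> Z\<close> X'(2) Z(2)] .
          have s1: "quot_col c X Z = quot_col c Z X" using sym_inst[OF symP XP(1) Z(1) \<open>X \<noteq> Z\<close>] .
          have s2: "quot_col c X' Z = quot_col c Z X'" using sym_inst[OF symP XP(2) Z(1) \<open>X' \<noteq> Z\<close>] .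
          have ZPC: "Z \<in> P - C" using Z ZC by blast
          have "quot_col c Z X = quot_col c Z X'" by (rule comp_module[OF C(1) symP rfP ZPC X(1) X'(1)])
          then show ?thesis using e1 e2 s1 s2 by simp
        qed
      qed
      have strongU: "strong_module V c U" unfolding strong_module_def
      proof (intro conjI allI impI)
        show "is_module V c U" by (rule modU)
        show "U \<noteq> {}" using X0U Pne[OF XY0(1)] by blast
      next
        fix N assume N: "is_module V c N"
        show "U \<subseteq> N \<or> N \<subseteq> U \<or> U \<inter> N = {}"
        proof (rule ccontr)
          assume nc: "\<not> ?thesis"
          then have nc1: "\<not> U \<subseteq> N" "\<not> N \<subseteq> U" "U \<inter> N \<noteq> {}" by blast+
          have "M \<subseteq> N \<or> N \<subseteq> M \<or> M \<inter> N = {}" by (rule strong_cmp[OF sM N])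
          then have NM: "N \<subseteq> M" using nc1 UM by blast
          have NV: "N \<subseteq> V" using N unfolding is_module_def by blast
          have nosub: "\<And>X. X \<in> P \<Longrightarrow> X \<subseteq> N \<or> X \<inter> N = {}"
          proof -
            fix X assume X: "X \<in> P"
            have "X \<subseteq> N \<or> N \<subseteq> X \<or> X \<inter> N = {}" using strong_cmp[OF _ N] PP[OF X] by blast
            moreover have "\<not> N \<subseteq> X"
            proof
              assume NX: "N \<subseteq> X"
              then have "X \<inter> U \<noteq> {}" using nc1(3) by blast
              then have "X \<in> C" using inC X by blast
              then have "N \<subseteq> U" using NX unfolding U_def by blast
              then show False using nc1 by blast
            qed
            ultimately show "X \<subseteq> N \<or> X \<inter> N = {}" by blast
          qed
          define Y where "Y = {X \<in> C. X \<subseteq> N}"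
          have "Y \<subseteq> C" unfolding Y_def by blast
          moreover have "Y \<noteq> {}"
          proof -
            obtain w where w: "w \<in> U" "w \<in> N" using nc1(3) by blast
            then obtain X where X: "X \<in> C" "w \<in> X" unfolding U_def by blast
            then have "X \<subseteq> N" using nosub CP w by blast
            then show ?thesis unfolding Y_def using X by blast
          qed
          moreover have "Y \<noteq> C"
          proof
            assume "Y = C"
            then have "U \<subseteq> N" unfolding U_def Y_def by blast
            then show False using nc1 by blast
          qed
          ultimately obtain X1 X2 where X12: "X1 \<in> Y" "X2 \<in> C - Y" "quot_col c X1 X2 = j"
            using comp_conn[OF C(1)] by meson
          have X1P: "X1 \<in> P" "X1 \<subseteq> N" "X1 \<in> C" using X12 CP unfolding Y_def by blast+
          have X2P: "X2 \<in> P" "X2 \<in> C" "X2 \<inter> N = {}" using X12 CP nosub unfolding Y_def by blast+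
          obtain y where y: "y \<in> N" "y \<notin> U" using nc1(2) by blast
          then obtain Z where Z: "Z \<in> P" "y \<in> Z" using cover NM by blast
          have ZC: "Z \<notin> C" using Z y unfolding U_def by blast
          have ZN: "Z \<subseteq> N" using nosub[OF Z(1)] Z y by blast
          have X2ne: "X2 \<noteq> {}" using Pne[OF X2P(1)] by simp
          have r2: "rep X2 \<in> X2" by (rule rep_in[OF X2ne])
          have "X1 \<noteq> {}" using Pne[OF X1P(1)] by simp
          then have r1: "rep X1 \<in> X1" by (rule rep_in)
          have "Z \<noteq> {}" using Pne[OF Z(1)] by simp
          then have rz: "rep Z \<in> Z" by (rule rep_in)
          have r2V: "rep X2 \<in> V" "rep X2 \<notin> N" using r2 Pne[OF X2P(1)] X2P(3) by blast+
          have ne12: "X1 \<noteq> X2" using X12 by blast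
          have neZ2: "Z \<noteq> X2" using ZC X2P by blast
          have "c (rep X1) (rep X2) = quot_col c X1 X2" by (rule edge[OF X1P(1) X2P(1) ne12 r1 r2])
          moreover have "c (rep X1) (rep X2) = c (rep Z) (rep X2)"
            using module_col[OF N _ _ r2V] r1 rz X1P ZN by blast
          moreover have "c (rep Z) (rep X2) = quot_col c Z X2" by (rule edge[OF Z(1) X2P(1) neZ2 rz r2])
          ultimately have "quot_col c Z X2 = j" using X12 by simp
          moreover have "quot_col c Z X2 = quot_col c X2 Z" by (rule sym_inst[OF symP Z(1) X2P(1) neZ2])
          ultimately have "quot_col c X2 Z = j" by simp
          moreover have "Z \<in> P - C" using Z ZC by blast
          ultimately show False using Ccl X2P unfolding closedc_def by blast
        qed
      qed
      have "U \<subset> M" using UM UneM by blast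
      then have "U = X0" using Pmax_max[of X0 V c M U] XY0(1) strongU X0U unfolding P_def by blast
      moreover have "Y0 \<noteq> {}" using Pne[OF XY0(2)] by simp
      moreover have "X0 \<inter> Y0 = {}" using Pdisj[OF XY0(1) XY0(2) XY0(3)] by simp
      ultimately show False using X0U by blast
    qed
  qed
  show ?thesis using part1 part2 unfolding QV_def by blast
qed


theorem corollary4p11:
  fixes V :: "'a set" and c :: "'a \<Rightarrow> 'a \<Rightarrow> 'c"
  assumes "ec_perm_graph V c"
  shows "\<forall>M. prime_module V c M \<longrightarrow>
           ec_perm_graph (quot_vertices V c M) (quot_col c) \<and>
           (card M \<ge> 3 \<longrightarrow> card (colors (quot_vertices V c M) (quot_col c)) = 2)"
  using main_part[OF assms] by blast

end
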